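(* In the call-by-name $\lambda$-calculus, $\approx^n_A=\approx^n_2=\cong^n=\simeq^n=\approx^n_1$.
   Context: $\Lambda^\bullet$ is the set of closed $\lambda$-terms. Contexts are generated by $C::=x\mid[\cdot]\mid C\,C\mid\lambda x.C$, possibly with several holes numbered left to right; $C[\widetilde M]$ fills the $i$-th hole with $M_i$; $C[M]$ fills every hole with $M$. For $\mathcal{R}\subseteq\Lambda^\bullet\times\Lambda^\bullet$, $\mathcal{R}^\star=\{(C[\widetilde M],C[\widetilde N]) : C\text{ a context},\ M_i\,\mathcal{R}\,N_i\ \forall i,\ C[\widetilde M],C[\widetilde N]\in\Lambda^\bullet\}$. Call-by-name reduction on closed terms: $MN\longrightarrow M'N$ if $M\longrightarrow M'$, and $(\lambda x.P)N\longrightarrow P[N/x]$; $\Longrightarrow$ is its reflexive transitive closure; $M{\Downarrow}$ means $M\Longrightarrow\lambda x.P$ for some closed abstraction. $M\simeq^n N$ iff for all contexts $C$ with $C[M],C[N]$ closed, $C[M]{\Downarrow}\iff C[N]{\Downarrow}$. Evaluation contexts $\mathcal{E}::=[\cdot]\mid\mathcal{E}\,M$ ($M\in\Lambda^\bullet$); $M\cong^n N$ iff for all $\mathcal{E}$, $\mathcal{E}[M]{\Downarrow}\iff\mathcal{E}[N]{\Downarrow}$. A relation $\mathcal{R}$ on $\Lambda^\bullet$ is an applicative bisimulation if $M\,\mathcal{R}\,N$ implies: whenever $M\Longrightarrow\lambda x.P$, then $N\Longrightarrow\lambda x.Q$ for some $Q$ with $P[W/x]\,\mathcal{R}\,Q[W/x]$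 for all $W\in\Lambda^\bullet$, and conversely; $\approx^n_A$ is the union of all applicative bisimulations. A coupled relation is a pair $(\mathcal{R}_1,\mathcal{R}_2)$ of relations on $\Lambda^\bullet$ with $\mathcal{R}_1\subseteq\mathcal{R}_2$; it is a (call-by-name) coupled logical bisimulation if whenever $M\,\mathcal{R}_2\,N$: (1) if $M\longrightarrow M'$ then there is $N'$ with $N\Longrightarrow N'$ and $M'\,\mathcal{R}_2\,N'$; (2) if $M=\lambda x.M'$ then $N\Longrightarrow\lambda x.N'$ for some $N'$ and for all $P,Q\in\Lambda^\bullet$ with $P\,\mathcal{R}_1^\star\,Q$, $M'[P/x]\,\mathcal{R}_2\,N'[Q/x]$; (3) the converses with $M$ and $N$ exchanged. $(\approx^n_1,\approx^n_2)$ is the componentwise union of all such bisimulations. *)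

theory Defs
  imports Main
begin

type_synonym var = nat

datatype lterm = Var var | App lterm lterm | Lam var lterm

fun fv :: "lterm \<Rightarrow> var set" where
  "fv (Var x) = {x}"
| "fv (App M N) = fv M \<union> fv N"
| "fv (Lam x M) = fv M - {x}"

definition closed :: "lterm \<Rightarrow> bool" where
  "closed M \<longleftrightarrow> fv M = {}"

text \<open>Substitution P[N/x]. It is only ever used with a closed N, in which case
  the naive definition is capture-avoiding.\<close>
fun subst :: "lterm \<Rightarrow> var \<Rightarrow> lterm \<Rightarrow> lterm" where
  "subst (Var y) x N = (if y = x then N else Var y)"
| "subst (App P Q) x N = App (subst P x N) (subst Q x N)"
| "subst (Lam y P) x N = (if y = x then Lam y P else Lam y (subst P x N))"

datatype ctx = CVar var | Hole | CApp ctx ctx | CLam var ctx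

fun nholes :: "ctx \<Rightarrow> nat" where
  "nholes (CVar x) = 0"
| "nholes Hole = 1"
| "nholes (CApp C D) = nholes C + nholes D"
| "nholes (CLam x C) = nholes C"

text \<open>C[M_1,...,M_n]: the i-th hole (left to right) is filled with the i-th list element.\<close>
fun fill :: "ctx \<Rightarrow> lterm list \<Rightarrow> lterm" where
  "fill (CVar x) Ms = Var x"
| "fill Hole Ms = hd Ms"
| "fill (CApp C D) Ms = App (fill C (take (nholes C) Ms)) (fill D (drop (nholes C) Ms))"
| "fill (CLam x C) Ms = Lam x (fill C Ms)"

definition plug :: "ctx \<Rightarrow> lterm \<Rightarrow> lterm" where
  "plug C M = fill C (replicate (nholes C) M)"

definition ctx_closure :: "lterm rel \<Rightarrow> lterm rel" where
  "ctx_closure R = {(fill C Ms, fill C Ns) | C Ms Ns.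
      length Ms = nholes C \<and> length Ns = nholes C \<and>
      (\<forall>i < nholes C. (Ms ! i, Ns ! i) \<in> R) \<and>
      closed (fill C Ms) \<and> closed (fill C Ns)}"

inductive red :: "lterm \<Rightarrow> lterm \<Rightarrow> bool" where
  red_app: "red M M' \<Longrightarrow> red (App M N) (App M' N)"
| red_beta: "red (App (Lam x P) N) (subst P x N)"

definition reds :: "lterm \<Rightarrow> lterm \<Rightarrow> bool" where
  "reds = red\<^sup>*\<^sup>*"

definition conv :: "lterm \<Rightarrow> bool" where
  "conv M \<longleftrightarrow> (\<exists>x P. reds M (Lam x P))"

definition ctx_equiv :: "lterm rel" where
  "ctx_equiv = {(M, N). closed M \<and> closed N \<and>
     (\<forall>C. closed (plug C M) \<and> closed (plug C N) \<longrightarrow> (conv (plug C M) \<longleftrightarrow> conv (plug C N)))}"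

text \<open>Evaluation contexts [.] M_1 ... M_k, with closed M_i, represented by the argument list.\<close>
definition eval_equiv :: "lterm rel" where
  "eval_equiv = {(M, N). closed M \<and> closed N \<and>
     (\<forall>As. (\<forall>A\<in>set As. closed A) \<longrightarrow> (conv (foldl App M As) \<longleftrightarrow> conv (foldl App N As)))}"

definition rel_on_closed :: "lterm rel \<Rightarrow> bool" where
  "rel_on_closed R \<longleftrightarrow> (\<forall>(M, N)\<in>R. closed M \<and> closed N)"

text \<open>Applicative bisimulation (abstractions are compared up to the choice of bound name).\<close>
definition app_bisim :: "lterm rel \<Rightarrow> bool" where
  "app_bisim R \<longleftrightarrow> rel_on_closed R \<and>
    (\<forall>(M, N)\<in>R.
      (\<forall>x P. reds M (Lam x P) \<longrightarrow> (\<exists>y Q. reds N (Lam y Q) \<and>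
          (\<forall>W. closed W \<longrightarrow> (subst P x W, subst Q y W) \<in> R))) \<and>
      (\<forall>y Q. reds N (Lam y Q) \<longrightarrow> (\<exists>x P. reds M (Lam x P) \<and>
          (\<forall>W. closed W \<longrightarrow> (subst P x W, subst Q y W) \<in> R))))"

definition app_bisimilar :: "lterm rel" where
  "app_bisimilar = \<Union>{R. app_bisim R}"

definition coupled_lb :: "lterm rel \<Rightarrow> lterm rel \<Rightarrow> bool" where
  "coupled_lb R1 R2 \<longleftrightarrow> rel_on_closed R1 \<and> rel_on_closed R2 \<and> R1 \<subseteq> R2 \<and>
    (\<forall>(M, N)\<in>R2.
      (\<forall>M'. red M M' \<longrightarrow> (\<exists>N'. reds N N' \<and> (M', N') \<in> R2)) \<and>
      (\<forall>x M'. M = Lam x M' \<longrightarrow> (\<exists>y N'. reds N (Lam y N') \<and>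
          (\<forall>P Q. closed P \<and> closed Q \<and> (P, Q) \<in> ctx_closure R1 \<longrightarrow>
             (subst M' x P, subst N' y Q) \<in> R2))) \<and>
      (\<forall>N'. red N N' \<longrightarrow> (\<exists>M'. reds M M' \<and> (M', N') \<in> R2)) \<and>
      (\<forall>y N'. N = Lam y N' \<longrightarrow> (\<exists>x M'. reds M (Lam x M') \<and>
          (\<forall>P Q. closed P \<and> closed Q \<and> (P, Q) \<in> ctx_closure R1 \<longrightarrow>
             (subst M' x P, subst N' y Q) \<in> R2))))"

definition lb1 :: "lterm rel" where
  "lb1 = \<Union>{R1. \<exists>R2. coupled_lb R1 R2}"

definition lb2 :: "lterm rel" where
  "lb2 = \<Union>{R2. \<exists>R1. coupled_lb R1 R2}"

end

theory Submission
  imports Defs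
begin

lemma fv_subst_sub: "fv (subst P x N) \<subseteq> (fv P - {x}) \<union> fv N"
  by (induction P) auto

lemma fv_subst_closed: "closed N \<Longrightarrow> fv (subst P x N) = fv P - {x}"
  by (induction P) (auto simp: closed_def)

lemma subst_nofv: "x \<notin> fv M \<Longrightarrow> subst M x W = M"
  by (induction M) auto

lemma finite_fv: "finite (fv M)"
  by (induction M) auto

lemma red_fv: "red M M' \<Longrightarrow> fv M' \<subseteq> fv M"
proof (induction rule: red.induct)
  case (red_beta x P N)
  then show ?case using fv_subst_sub[of P x N] by auto
qed auto

lemma reds_closed: "reds M M' \<Longrightarrow> closed M \<Longrightarrow> closed M'"
  unfolding reds_def closed_def
  by (induction rule: rtranclp_induct) (use red_fv in blast)+

lemma no_red_lam: "\<not> red (Lam x P) M"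
  by (auto elim: red.cases)

lemma red_det: "red M M1 \<Longrightarrow> red M M2 \<Longrightarrow> M1 = M2"
proof (induction arbitrary: M2 rule: red.induct)
  case (red_app M M' N)
  from red_app.prems show ?case
  proof (cases rule: red.cases)
    case (red_app M'')
    then show ?thesis using red_app.IH by auto
  next
    case (red_beta x P)
    then show ?thesis using red_app.hyps no_red_lam by auto
  qed
next
  case (red_beta x P N)
  from red_beta show ?case
    by (cases rule: red.cases) (auto simp: no_red_lam)
qed

lemma reds_det: "reds M M' \<Longrightarrow> reds M V \<Longrightarrow> (\<And>W. \<not> red V W) \<Longrightarrow> reds M' V"
  unfolding reds_def
proof (induction arbitrary: V rule: converse_rtranclp_induct)
  case base
  then show ?case by simp
next
  case (step M M1)
  from step.prems(1) show ?case
  proof (cases rule: converse_rtranclpE)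
    case base
    then show ?thesis using step.hyps(1) step.prems(2) by auto
  next
    case (step M2)
    then have "M2 = M1" using red_det \<open>red M M1\<close> by auto
    then show ?thesis using step step.IH[of V] \<open>\<And>W. \<not> red V W\<close> by auto
  qed
qed

lemma conv_reds: "conv M \<Longrightarrow> reds M M' \<Longrightarrow> conv M'"
  unfolding conv_def using reds_det no_red_lam by blast

lemma reds_conv: "reds M M' \<Longrightarrow> conv M' \<Longrightarrow> conv M"
  unfolding conv_def reds_def by (meson rtranclp_trans)

lemma reds_refl: "reds M M" unfolding reds_def by simp

lemma reds_trans: "reds M M' \<Longrightarrow> reds M' M'' \<Longrightarrow> reds M M''"
  unfolding reds_def by (meson rtranclp_trans)

lemma red_reds: "red M M' \<Longrightarrow> reds M M'"
  unfolding reds_def by simp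

lemma reds_App: "reds M M' \<Longrightarrow> reds (App M A) (App M' A)"
  unfolding reds_def
  by (induction rule: rtranclp_induct) (auto intro: rtranclp.rtrancl_into_rtrancl red_app)

lemma reds_foldl: "reds M M' \<Longrightarrow> reds (foldl App M As) (foldl App M' As)"
  by (induction As arbitrary: M M') (auto simp: reds_App)

lemma reds_beta: "reds M (Lam x P) \<Longrightarrow> reds (App M A) (subst P x A)"
  using reds_App[of M "Lam x P" A] red_beta[of x P A] reds_trans red_reds by blast

lemma fv_foldl: "fv (foldl App M As) = fv M \<union> (\<Union>A\<in>set As. fv A)"
  by (induction As arbitrary: M) auto



definition simulation :: "lterm rel \<Rightarrow> bool" where
  "simulation R \<longleftrightarrow> rel_on_closed R \<and>
    (\<forall>(M, N)\<in>R. \<forall>x P. reds M (Lam x P) \<longrightarrow> (\<exists>y Q. reds N (Lam y Q) \<and>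
          (\<forall>W. closed W \<longrightarrow> (subst P x W, subst Q y W) \<in> R)))"

definition sim :: "lterm rel" where "sim = \<Union>{R. simulation R}"

lemma simulation_sub: "simulation R \<Longrightarrow> R \<subseteq> sim"
  unfolding sim_def by blast

lemma sim_closed: "(M, N) \<in> sim \<Longrightarrow> closed M \<and> closed N"
  unfolding sim_def simulation_def rel_on_closed_def by blast

lemma sim_step: "(M, N) \<in> sim \<Longrightarrow> reds M (Lam x P) \<Longrightarrow>
   \<exists>y Q. reds N (Lam y Q) \<and> (\<forall>W. closed W \<longrightarrow> (subst P x W, subst Q y W) \<in> sim)"
proof -
  assume "(M, N) \<in> sim" "reds M (Lam x P)"
  then obtain R where R: "simulation R" "(M, N) \<in> R" unfolding sim_def by blast
  then obtain y Q where "reds N (Lam y Q)" "\<forall>W. closed W \<longrightarrow> (subst P x W, subst Q y W) \<in> R"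
    using \<open>reds M (Lam x P)\<close> unfolding simulation_def by fastforce
  then show ?thesis using simulation_sub[OF R(1)] by blast
qed

lemma closed_lam_subst: "closed (Lam x P) \<Longrightarrow> closed W \<Longrightarrow> closed (subst P x W)"
  using fv_subst_closed[of W P x] by (auto simp: closed_def)

lemma sim_refl: "closed M \<Longrightarrow> (M, M) \<in> sim"
proof -
  let ?R = "{(M, M) | M. closed M}"
  have "simulation ?R"
    unfolding simulation_def rel_on_closed_def
  proof (intro conjI ballI allI impI)
    fix p assume "p \<in> ?R" then show "case p of (M, N) \<Rightarrow> closed M \<and> closed N" by auto
  next
    fix p assume "p \<in> ?R"
    then obtain M where p: "p = (M, M)" "closed M" by auto
    show "case p of (M, N) \<Rightarrow> \<forall>x P. reds M (Lam x P) \<longrightarrow> (\<exists>y Q. reds N (Lam y Q) \<and>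
          (\<forall>W. closed W \<longrightarrow> (subst P x W, subst Q y W) \<in> ?R))"
      unfolding p(1) using p(2) reds_closed closed_lam_subst by blast
  qed
  moreover assume "closed M"
  ultimately show ?thesis using simulation_sub by blast
qed

lemma sim_trans: "(M, N) \<in> sim \<Longrightarrow> (N, L) \<in> sim \<Longrightarrow> (M, L) \<in> sim"
proof -
  have "simulation (sim O sim)"
    unfolding simulation_def rel_on_closed_def
  proof (intro conjI ballI allI impI; clarsimp)
    fix M N L assume "(M, N) \<in> sim" "(N, L) \<in> sim"
    then show "closed M \<and> closed L" using sim_closed by blast
  next
    fix M N L x P assume a: "(M, N) \<in> sim" "(N, L) \<in> sim" "reds M (Lam x P)"
    then obtain y Q where b: "reds N (Lam y Q)" "\<forall>W. closed W \<longrightarrow> (subst P x W, subst Q y W) \<in> sim"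
      using sim_step by blast
    then obtain z S where c: "reds L (Lam z S)" "\<forall>W. closed W \<longrightarrow> (subst Q y W, subst S z W) \<in> sim"
      using sim_step a(2) by blast
    show "\<exists>y Q. reds L (Lam y Q) \<and> (\<forall>W. closed W \<longrightarrow> (subst P x W, subst Q y W) \<in> sim O sim)"
      using b c by blast
  qed
  then show "(M, N) \<in> sim \<Longrightarrow> (N, L) \<in> sim \<Longrightarrow> (M, L) \<in> sim"
    using simulation_sub by blast
qed

lemma sim_red_left: "(M, N) \<in> sim \<Longrightarrow> reds M M' \<Longrightarrow> (M', N) \<in> sim"
proof -
  let ?R = "{(M', N). \<exists>M. (M, N) \<in> sim \<and> reds M M'}"
  have "simulation ?R"
    unfolding simulation_def rel_on_closed_def
  proof (intro conjI ballI allI impI; clarsimp)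
    fix M' N M assume "(M, N) \<in> sim" "reds M M'"
    then show "closed M' \<and> closed N" using sim_closed reds_closed by blast
  next
    fix M' N M x P assume a: "(M, N) \<in> sim" "reds M M'" "reds M' (Lam x P)"
    then have "reds M (Lam x P)" using reds_trans by blast
    then obtain y Q where b: "reds N (Lam y Q)" "\<forall>W. closed W \<longrightarrow> (subst P x W, subst Q y W) \<in> sim"
      using sim_step a(1) by blast
    then show "\<exists>y Q. reds N (Lam y Q) \<and> (\<forall>W. closed W \<longrightarrow> (\<exists>M. (M, subst Q y W) \<in> sim \<and> reds M (subst P x W)))"
      using reds_refl by blast
  qed
  then show "(M, N) \<in> sim \<Longrightarrow> reds M M' \<Longrightarrow> (M', N) \<in> sim"
    using simulation_sub by blast
qed

lemma sim_conv: "(M, N) \<in> sim \<Longrightarrow> conv M \<Longrightarrow> conv N"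
  unfolding conv_def using sim_step by blast

fun substs :: "(var \<times> lterm) list \<Rightarrow> lterm \<Rightarrow> lterm" where
  "substs [] M = M"
| "substs ((x, W) # ps) M = substs ps (subst M x W)"

definition cl :: "(var \<times> lterm) list \<Rightarrow> bool" where
  "cl ps \<longleftrightarrow> (\<forall>p\<in>set ps. closed (snd p))"

lemma cl_simps[simp]: "cl [] " "cl ((x, W) # ps) \<longleftrightarrow> closed W \<and> cl ps" "cl (ps @ qs) \<longleftrightarrow> cl ps \<and> cl qs"
  unfolding cl_def by auto

lemma fv_substs: "cl ps \<Longrightarrow> fv (substs ps M) = fv M - fst ` set ps"
proof (induction ps arbitrary: M)
  case (Cons p ps)
  then show ?case by (cases p) (auto simp: fv_subst_closed)
qed simp

lemma substs_App[simp]: "substs ps (App M N) = App (substs ps M) (substs ps N)"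
  by (induction ps arbitrary: M N) auto

lemma substs_Lam: "x \<notin> fst ` set ps \<Longrightarrow> substs ps (Lam x M) = Lam x (substs ps M)"
  by (induction ps arbitrary: M) auto

lemma substs_nofv: "fv M \<inter> fst ` set ps = {} \<Longrightarrow> cl ps \<Longrightarrow> substs ps M = M"
  by (induction ps arbitrary: M) (auto simp: subst_nofv)

lemma substs_closed: "closed M \<Longrightarrow> cl ps \<Longrightarrow> substs ps M = M"
  using substs_nofv unfolding closed_def by auto

lemma substs_append: "substs (ps @ qs) M = substs qs (substs ps M)"
  by (induction ps arbitrary: M) auto

definition Iterm :: lterm where "Iterm = Lam 0 (Var 0)"

lemma closed_I: "closed Iterm" unfolding Iterm_def closed_def by simp

definition cover :: "var set \<Rightarrow> (var \<times> lterm) list" where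
  "cover S = map (\<lambda>v. (v, Iterm)) (sorted_list_of_set S)"

lemma cover_cl: "cl (cover S)"
  unfolding cover_def cl_def using closed_I by auto

lemma cover_vars: "finite S \<Longrightarrow> fst ` set (cover S) = S"
  unfolding cover_def by (simp add: image_image)

section \<open>Open extension\<close>

definition osim :: "lterm \<Rightarrow> lterm \<Rightarrow> bool" where
  "osim M N \<longleftrightarrow> (\<forall>ps. cl ps \<and> fv M \<union> fv N \<subseteq> fst ` set ps \<longrightarrow> (substs ps M, substs ps N) \<in> sim)"

lemma osim_refl: "osim M M"
  unfolding osim_def
proof (intro allI impI)
  fix ps assume "cl ps \<and> fv M \<union> fv M \<subseteq> fst ` set ps"
  then have "closed (substs ps M)" using fv_substs unfolding closed_def by auto
  then show "(substs ps M, substs ps M) \<in> sim" using sim_refl by blast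
qed

lemma osim_trans: "osim M N \<Longrightarrow> osim N L \<Longrightarrow> osim M L"
  unfolding osim_def
proof (intro allI impI)
  fix ps assume a: "\<forall>ps. cl ps \<and> fv M \<union> fv N \<subseteq> fst ` set ps \<longrightarrow> (substs ps M, substs ps N) \<in> sim"
    "\<forall>ps. cl ps \<and> fv N \<union> fv L \<subseteq> fst ` set ps \<longrightarrow> (substs ps N, substs ps L) \<in> sim"
    and b: "cl ps \<and> fv M \<union> fv L \<subseteq> fst ` set ps"
  define rs where "rs = ps @ cover (fv N)"
  have crs: "cl rs" unfolding rs_def using b cover_cl by simp
  have vrs: "fst ` set rs = fst ` set ps \<union> fv N"
    unfolding rs_def using cover_vars[OF finite_fv] by (simp add: image_Un)
  have cM: "closed (substs ps M)" "closed (substs ps L)"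
    using b fv_substs unfolding closed_def by auto
  have "substs rs M = substs ps M" "substs rs L = substs ps L"
    unfolding rs_def substs_append using cM substs_closed cover_cl by auto
  moreover have "(substs rs M, substs rs N) \<in> sim" "(substs rs N, substs rs L) \<in> sim"
  proof -
    have v: "fv M \<subseteq> fst ` set rs" "fv N \<subseteq> fst ` set rs" "fv L \<subseteq> fst ` set rs"
      using vrs b by auto
    show "(substs rs M, substs rs N) \<in> sim" "(substs rs N, substs rs L) \<in> sim"
      using a(1)[rule_format, of rs] a(2)[rule_format, of rs] crs v by auto
  qed
  ultimately show "(substs ps M, substs ps L) \<in> sim" using sim_trans by metis
qed

lemma osim_subst: "osim M N \<Longrightarrow> closed W \<Longrightarrow> osim (subst M x W) (subst N x W)"
  unfolding osim_def
proof (intro allI impI)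
  fix ps assume a: "\<forall>ps. cl ps \<and> fv M \<union> fv N \<subseteq> fst ` set ps \<longrightarrow> (substs ps M, substs ps N) \<in> sim"
    and W: "closed W" and b: "cl ps \<and> fv (subst M x W) \<union> fv (subst N x W) \<subseteq> fst ` set ps"
  have "cl ((x, W) # ps) \<and> fv M \<union> fv N \<subseteq> fst ` set ((x, W) # ps)"
    using b W fv_subst_closed[OF W] by auto
  then show "(substs ps (subst M x W), substs ps (subst N x W)) \<in> sim"
    using a by fastforce
qed

lemma osim_sim: "osim M N \<Longrightarrow> closed M \<Longrightarrow> closed N \<Longrightarrow> (M, N) \<in> sim"
  unfolding osim_def closed_def by (drule spec[of _ "[]"]) auto

lemma sim_osim: "(M, N) \<in> sim \<Longrightarrow> osim M N"
  unfolding osim_def using sim_closed substs_closed by metis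



inductive howe :: "lterm \<Rightarrow> lterm \<Rightarrow> bool" where
  hVar: "osim (Var x) N \<Longrightarrow> howe (Var x) N"
| hLam: "howe M M' \<Longrightarrow> osim (Lam x M') N \<Longrightarrow> howe (Lam x M) N"
| hApp: "howe M1 M1' \<Longrightarrow> howe M2 M2' \<Longrightarrow> osim (App M1' M2') N \<Longrightarrow> howe (App M1 M2) N"

lemma howe_refl: "howe M M"
  by (induction M) (auto intro: howe.intros osim_refl)

lemma howe_osim: "howe M N \<Longrightarrow> osim N L \<Longrightarrow> howe M L"
  by (induction rule: howe.cases) (auto intro: howe.intros osim_trans)

lemma osim_howe: "osim M N \<Longrightarrow> howe M N"
  using howe_osim howe_refl by blast

lemma howe_Lam: "howe M M' \<Longrightarrow> howe (Lam x M) (Lam x M')"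
  by (auto intro: howe.intros osim_refl)

lemma howe_App: "howe M M' \<Longrightarrow> howe N N' \<Longrightarrow> howe (App M N) (App M' N')"
  by (auto intro: howe.intros osim_refl)

lemma howe_subst: "howe M M' \<Longrightarrow> howe N N' \<Longrightarrow> closed N \<Longrightarrow> closed N' \<Longrightarrow>
   howe (subst M x N) (subst M' x N')"
proof (induction M M' rule: howe.induct)
  case (hVar y L)
  show ?case
  proof (cases "y = x")
    case True
    have "osim (subst (Var y) x N') (subst L x N')" using osim_subst hVar by blast
    then have "osim N' (subst L x N')" using True by simp
    then show ?thesis using True hVar howe_osim by simp
  next
    case False
    have "osim (subst (Var y) x N') (subst L x N')" using osim_subst hVar by blast
    then show ?thesis using False by (auto intro: howe.intros)
  qed
next
  case (hLam M M' y L)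
  have o: "osim (subst (Lam y M') x N') (subst L x N')" using osim_subst hLam by blast
  show ?case
  proof (cases "y = x")
    case True
    then show ?thesis using o hLam by (auto intro: howe.intros)
  next
    case False
    then show ?thesis using o hLam by (auto intro: howe.intros)
  qed
next
  case (hApp M1 M1' M2 M2' L)
  have o: "osim (subst (App M1' M2') x N') (subst L x N')" using osim_subst hApp by blast
  then show ?case using hApp by (auto intro: howe.intros)
qed

lemma howe_substs: "howe M M' \<Longrightarrow> cl ps \<Longrightarrow> howe (substs ps M) (substs ps M')"
proof (induction ps arbitrary: M M')
  case (Cons p ps)
  then show ?case by (cases p) (auto intro: howe_subst howe_refl)
qed simp

lemma howe_App_closed:
  assumes "howe (App M1 M2) N" "closed (App M1 M2)" "closed N"
  shows "\<exists>L1 L2. closed L1 \<and> closed L2 \<and> howe M1 L1 \<and> howe M2 L2 \<and> (App L1 L2, N) \<in> sim"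
proof -
  from assms(1) obtain L1 L2 where h: "howe M1 L1" "howe M2 L2" "osim (App L1 L2) N"
    by (cases rule: howe.cases) auto
  define ps where "ps = cover (fv L1 \<union> fv L2)"
  have cps: "cl ps" unfolding ps_def using cover_cl by simp
  have vps: "fst ` set ps = fv L1 \<union> fv L2" unfolding ps_def using cover_vars finite_fv by simp
  have c12: "closed M1" "closed M2" using assms(2) unfolding closed_def by auto
  have "closed (substs ps L1)" "closed (substs ps L2)"
    using fv_substs[OF cps] vps unfolding closed_def by auto
  moreover have "howe M1 (substs ps L1)" "howe M2 (substs ps L2)"
    using howe_substs[OF h(1) cps] howe_substs[OF h(2) cps] substs_closed c12 cps by auto
  moreover have "(substs ps (App L1 L2), substs ps N) \<in> sim"
    using h(3) cps vps assms(3) unfolding osim_def closed_def by auto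
  then have "(App (substs ps L1) (substs ps L2), N) \<in> sim"
    using substs_closed[OF assms(3) cps] by simp
  ultimately show ?thesis by blast
qed

lemma howe_Lam_closed:
  assumes "howe (Lam x P) N" "closed (Lam x P)" "closed N"
  shows "\<exists>P'. closed (Lam x P') \<and> howe P P' \<and> (Lam x P', N) \<in> sim"
proof -
  from assms(1) obtain P0 where h: "howe P P0" "osim (Lam x P0) N"
    by (cases rule: howe.cases) auto
  define ps where "ps = cover (fv P0 - {x})"
  have cps: "cl ps" unfolding ps_def using cover_cl by simp
  have vps: "fst ` set ps = fv P0 - {x}" unfolding ps_def using cover_vars finite_fv by simp
  have xps: "x \<notin> fst ` set ps" using vps by auto
  have lam: "substs ps (Lam x P0) = Lam x (substs ps P0)" using substs_Lam[OF xps] .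
  have "closed (Lam x (substs ps P0))"
    using fv_substs[OF cps] vps unfolding closed_def by auto
  moreover have "substs ps P = P"
    using assms(2) vps cps by (intro substs_nofv) (auto simp: closed_def)
  then have "howe P (substs ps P0)" using howe_substs[OF h(1) cps] by simp
  moreover have "(substs ps (Lam x P0), substs ps N) \<in> sim"
    using h(2) cps vps assms(3) unfolding osim_def closed_def by auto
  then have "(Lam x (substs ps P0), N) \<in> sim"
    using substs_closed[OF assms(3) cps] lam by simp
  ultimately show ?thesis by blast
qed

lemma howe_red: "red M M' \<Longrightarrow> closed M \<Longrightarrow> closed N \<Longrightarrow> howe M N \<Longrightarrow> howe M' N"
proof (induction arbitrary: N rule: red.induct)
  case (red_app M M' A)
  obtain L1 L2 where l: "closed L1" "closed L2" "howe M L1" "howe A L2" "(App L1 L2, N) \<in> sim"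
    using howe_App_closed[OF red_app.prems(3,1,2)] by blast
  have "closed M" using red_app.prems(1) unfolding closed_def by auto
  then have "howe M' L1" using red_app.IH l by blast
  then show ?case using l by (auto intro: howe.intros sim_osim)
next
  case (red_beta x P A)
  obtain L1 L2 where l: "closed L1" "closed L2" "howe (Lam x P) L1" "howe A L2" "(App L1 L2, N) \<in> sim"
    using howe_App_closed[OF red_beta.prems(3,1,2)] by blast
  have cl: "closed (Lam x P)" "closed A" using red_beta.prems(1) unfolding closed_def by auto
  obtain P' where p: "closed (Lam x P')" "howe P P'" "(Lam x P', L1) \<in> sim"
    using howe_Lam_closed[OF l(3) cl(1) l(1)] by blast
  obtain y Q where q: "reds L1 (Lam y Q)" "\<forall>W. closed W \<longrightarrow> (subst P' x W, subst Q y W) \<in> sim"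
    using sim_step[OF p(3) reds_refl] by blast
  have "reds (App L1 L2) (subst Q y L2)" using reds_beta[OF q(1)] .
  then have s1: "(subst Q y L2, N) \<in> sim" using sim_red_left l(5) by blast
  have "(subst P' x L2, N) \<in> sim" using sim_trans q(2) l(2) s1 by blast
  moreover have "howe (subst P x A) (subst P' x L2)"
    using howe_subst[OF p(2) l(4) cl(2) l(2)] .
  ultimately show ?case using howe_osim sim_osim by blast
qed

lemma howe_reds: "reds M M' \<Longrightarrow> closed M \<Longrightarrow> closed N \<Longrightarrow> howe M N \<Longrightarrow> howe M' N"
  unfolding reds_def
proof (induction rule: rtranclp_induct)
  case (step y z)
  then show ?case using howe_red reds_closed[of M y] unfolding reds_def by blast
qed simp

lemma howe_sim: "howe M N \<Longrightarrow> closed M \<Longrightarrow> closed N \<Longrightarrow> (M, N) \<in> sim"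
proof -
  let ?R = "{(M, N). closed M \<and> closed N \<and> howe M N}"
  have "simulation ?R"
    unfolding simulation_def rel_on_closed_def
  proof (intro conjI ballI allI impI)
    fix p assume "p \<in> ?R" then show "case p of (M, N) \<Rightarrow> closed M \<and> closed N" by auto
  next
    fix p assume "p \<in> ?R"
    then obtain M N where p: "p = (M, N)" "closed M" "closed N" "howe M N" by auto
    have "\<exists>y Q. reds N (Lam y Q) \<and> (\<forall>W. closed W \<longrightarrow> (subst P x W, subst Q y W) \<in> ?R)"
      if r: "reds M (Lam x P)" for x P
    proof -
      have cl: "closed (Lam x P)" using reds_closed r p by blast
      have "howe (Lam x P) N" using howe_reds r p by blast
      then obtain P' where p': "closed (Lam x P')" "howe P P'" "(Lam x P', N) \<in> sim"
        using howe_Lam_closed cl p by blast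
      obtain y Q where q: "reds N (Lam y Q)" "\<forall>W. closed W \<longrightarrow> (subst P' x W, subst Q y W) \<in> sim"
        using sim_step[OF p'(3) reds_refl] by blast
      have clQ: "closed (Lam y Q)" using reds_closed q(1) p by blast
      have "(subst P x W, subst Q y W) \<in> ?R" if W: "closed W" for W
      proof -
        have "howe (subst P x W) (subst P' x W)" using howe_subst[OF p'(2) howe_refl W W] .
        then have "howe (subst P x W) (subst Q y W)" using q(2) W howe_osim sim_osim by blast
        then show ?thesis using closed_lam_subst cl clQ W by blast
      qed
      then show ?thesis using q(1) by blast
    qed
    then show "case p of (M, N) \<Rightarrow> \<forall>x P. reds M (Lam x P) \<longrightarrow> (\<exists>y Q. reds N (Lam y Q) \<and>
          (\<forall>W. closed W \<longrightarrow> (subst P x W, subst Q y W) \<in> ?R))"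
      using p(1) by auto
  qed
  then show "howe M N \<Longrightarrow> closed M \<Longrightarrow> closed N \<Longrightarrow> (M, N) \<in> sim"
    using simulation_sub by blast
qed



fun tctx :: "lterm \<Rightarrow> ctx" where
  "tctx (Var x) = CVar x"
| "tctx (App M N) = CApp (tctx M) (tctx N)"
| "tctx (Lam x M) = CLam x (tctx M)"

lemma nholes_tctx[simp]: "nholes (tctx A) = 0"
  by (induction A) auto

lemma fill_tctx[simp]: "fill (tctx A) Ms = A"
  by (induction A arbitrary: Ms) auto

lemma howe_fill: "length Ms = nholes C \<Longrightarrow> length Ns = nholes C \<Longrightarrow>
  (\<forall>i < nholes C. howe (Ms ! i) (Ns ! i)) \<Longrightarrow> howe (fill C Ms) (fill C Ns)"
proof (induction C arbitrary: Ms Ns)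
  case (CVar x)
  then show ?case by (simp add: howe_refl)
next
  case Hole
  then show ?case by (cases Ms; cases Ns) auto
next
  case (CApp C D)
  have "howe (fill C (take (nholes C) Ms)) (fill C (take (nholes C) Ns))"
    using CApp.prems by (intro CApp.IH(1)) auto
  moreover have "howe (fill D (drop (nholes C) Ms)) (fill D (drop (nholes C) Ns))"
    using CApp.prems by (intro CApp.IH(2)) auto
  ultimately show ?case by (simp add: howe_App)
next
  case (CLam x C)
  then show ?case by (simp add: howe_Lam)
qed

lemma sim_fill: "length Ms = nholes C \<Longrightarrow> length Ns = nholes C \<Longrightarrow>
  (\<forall>i < nholes C. (Ms ! i, Ns ! i) \<in> sim) \<Longrightarrow> closed (fill C Ms) \<Longrightarrow> closed (fill C Ns) \<Longrightarrow>
  (fill C Ms, fill C Ns) \<in> sim"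
  using howe_fill[of Ms C Ns] howe_sim sim_osim osim_howe by blast

lemma sim_plug: "(M, N) \<in> sim \<Longrightarrow> closed (plug C M) \<Longrightarrow> closed (plug C N) \<Longrightarrow> (plug C M, plug C N) \<in> sim"
  unfolding plug_def by (rule sim_fill) auto

lemma sim_foldl: "(M, N) \<in> sim \<Longrightarrow> \<forall>A\<in>set As. closed A \<Longrightarrow> (foldl App M As, foldl App N As) \<in> sim"
proof (induction As arbitrary: M N)
  case (Cons A As)
  have "howe (App M A) (App N A)"
    using Cons.prems howe_App howe_refl sim_osim osim_howe by blast
  moreover have "closed (App M A)" "closed (App N A)"
    using Cons.prems sim_closed unfolding closed_def by auto
  ultimately have "(App M A, App N A) \<in> sim" using howe_sim by blast
  then show ?case using Cons by simp
qed simp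

definition evpre :: "lterm rel" where
  "evpre = {(M, N). closed M \<and> closed N \<and>
     (\<forall>As. (\<forall>A\<in>set As. closed A) \<longrightarrow> conv (foldl App M As) \<longrightarrow> conv (foldl App N As))}"

lemma sim_evpre: "sim \<subseteq> evpre"
  unfolding evpre_def using sim_closed sim_foldl sim_conv by blast

lemma evpre_sim: "evpre \<subseteq> sim"
proof -
  have "simulation evpre"
    unfolding simulation_def rel_on_closed_def
  proof (intro conjI ballI allI impI)
    fix p assume "p \<in> evpre" then show "case p of (M, N) \<Rightarrow> closed M \<and> closed N"
      unfolding evpre_def by auto
  next
    fix p assume "p \<in> evpre"
    then obtain M N where p: "p = (M, N)" "(M, N) \<in> evpre" by (cases p) auto
    have "\<exists>y Q. reds N (Lam y Q) \<and> (\<forall>W. closed W \<longrightarrow> (subst P x W, subst Q y W) \<in> evpre)"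
      if r: "reds M (Lam x P)" for x P
    proof -
      have e: "closed M" "closed N" "\<And>As. \<forall>A\<in>set As. closed A \<Longrightarrow> conv (foldl App M As) \<Longrightarrow> conv (foldl App N As)"
        using p(2) unfolding evpre_def by auto
      have "conv M" using r unfolding conv_def by blast
      then have "conv N" using e(3)[of "[]"] by simp
      then obtain y Q where q: "reds N (Lam y Q)" unfolding conv_def by blast
      have "(subst P x W, subst Q y W) \<in> evpre" if W: "closed W" for W
      proof -
        have cl: "closed (subst P x W)" "closed (subst Q y W)"
          using closed_lam_subst reds_closed r q e W by blast+
        have "conv (foldl App (subst Q y W) As)"
          if As: "\<forall>A\<in>set As. closed A" "conv (foldl App (subst P x W) As)" for As
        proof -
          have "conv (foldl App M (W # As))"
            using reds_foldl[OF reds_beta[OF r, of W]] As(2) reds_conv by (simp; blast)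
          then have "conv (foldl App N (W # As))" using e(3)[of "W # As"] As W by simp
          then show ?thesis using reds_foldl[OF reds_beta[OF q, of W]] conv_reds by (simp; blast)
        qed
        then show ?thesis using cl unfolding evpre_def by auto
      qed
      then show ?thesis using q by blast
    qed
    then show "case p of (M, N) \<Rightarrow> \<forall>x P. reds M (Lam x P) \<longrightarrow> (\<exists>y Q. reds N (Lam y Q) \<and>
          (\<forall>W. closed W \<longrightarrow> (subst P x W, subst Q y W) \<in> evpre))"
      using p(1) by auto
  qed
  then show ?thesis using simulation_sub by blast
qed

lemma evpre_eq: "evpre = sim" using evpre_sim sim_evpre by blast

lemma eval_equiv_sim: "eval_equiv = {(M, N). (M, N) \<in> sim \<and> (N, M) \<in> sim}"
  unfolding evpre_eq[symmetric] eval_equiv_def evpre_def by auto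

lemma reds_lam: "reds (Lam x P) V \<Longrightarrow> V = Lam x P"
  unfolding reds_def by (auto elim: converse_rtranclpE simp: no_red_lam)

lemma lam_unique: "reds M (Lam x P) \<Longrightarrow> reds M (Lam y Q) \<Longrightarrow> x = y \<and> P = Q"
  using reds_det[of M "Lam x P" "Lam y Q"] no_red_lam reds_lam by blast



lemma appbis_sub: "app_bisim R \<Longrightarrow> R \<subseteq> eval_equiv"
proof -
  assume a: "app_bisim R"
  have "simulation R" using a unfolding app_bisim_def simulation_def by blast
  moreover have "simulation (R\<inverse>)" using a unfolding app_bisim_def simulation_def rel_on_closed_def
    by (auto; blast)
  ultimately show ?thesis unfolding eval_equiv_sim using simulation_sub by blast
qed

lemma A_sub_E: "app_bisimilar \<subseteq> eval_equiv"
  unfolding app_bisimilar_def using appbis_sub by blast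

lemma E_step: "(M, N) \<in> eval_equiv \<Longrightarrow> reds M (Lam x P) \<Longrightarrow>
  \<exists>y Q. reds N (Lam y Q) \<and> (\<forall>W. closed W \<longrightarrow> (subst P x W, subst Q y W) \<in> eval_equiv)"
proof -
  assume e: "(M, N) \<in> eval_equiv" and r: "reds M (Lam x P)"
  then have s: "(M, N) \<in> sim" "(N, M) \<in> sim" unfolding eval_equiv_sim by auto
  obtain y Q where q: "reds N (Lam y Q)" "\<forall>W. closed W \<longrightarrow> (subst P x W, subst Q y W) \<in> sim"
    using sim_step[OF s(1) r] by blast
  obtain x' P' where q': "reds M (Lam x' P')" "\<forall>W. closed W \<longrightarrow> (subst Q y W, subst P' x' W) \<in> sim"
    using sim_step[OF s(2) q(1)] by blast
  have "x' = x" "P' = P" using lam_unique[OF r q'(1)] by auto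
  then show ?thesis using q q' unfolding eval_equiv_sim by auto
qed

lemma E_sym: "(M, N) \<in> eval_equiv \<Longrightarrow> (N, M) \<in> eval_equiv"
  unfolding eval_equiv_sim by auto

lemma E_trans: "(M, N) \<in> eval_equiv \<Longrightarrow> (N, L) \<in> eval_equiv \<Longrightarrow> (M, L) \<in> eval_equiv"
  unfolding eval_equiv_sim using sim_trans by auto

lemma E_closed: "(M, N) \<in> eval_equiv \<Longrightarrow> closed M \<and> closed N"
  unfolding eval_equiv_def by auto

lemma E_appbis: "app_bisim eval_equiv"
  unfolding app_bisim_def rel_on_closed_def
proof (intro conjI ballI)
  fix p assume "p \<in> eval_equiv"
  then show "case p of (M, N) \<Rightarrow> closed M \<and> closed N" using E_closed by (cases p) auto
next
  fix p assume "p \<in> eval_equiv"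
  then obtain M N where p: "p = (M, N)" "(M, N) \<in> eval_equiv" by (cases p) auto
  have d2: "\<exists>x P. reds M (Lam x P) \<and> (\<forall>W. closed W \<longrightarrow> (subst P x W, subst Q y W) \<in> eval_equiv)"
    if r: "reds N (Lam y Q)" for y Q
  proof -
    obtain x P where "reds M (Lam x P)" "\<forall>W. closed W \<longrightarrow> (subst Q y W, subst P x W) \<in> eval_equiv"
      using E_step[OF E_sym[OF p(2)] r] by blast
    then show ?thesis using E_sym by blast
  qed
  show "case p of (M, N) \<Rightarrow>
      (\<forall>x P. reds M (Lam x P) \<longrightarrow> (\<exists>y Q. reds N (Lam y Q) \<and>
          (\<forall>W. closed W \<longrightarrow> (subst P x W, subst Q y W) \<in> eval_equiv))) \<and>
      (\<forall>y Q. reds N (Lam y Q) \<longrightarrow> (\<exists>x P. reds M (Lam x P) \<and>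
          (\<forall>W. closed W \<longrightarrow> (subst P x W, subst Q y W) \<in> eval_equiv)))"
    using p E_step d2 by auto
qed

lemma E_sub_A: "eval_equiv \<subseteq> app_bisimilar"
  unfolding app_bisimilar_def using E_appbis by blast

definition ectx :: "lterm list \<Rightarrow> ctx" where
  "ectx As = foldl (\<lambda>C A. CApp C (tctx A)) Hole As"

lemma plug_CApp_tctx: "plug (CApp C0 (tctx A)) M = App (plug C0 M) A"
  by (simp add: plug_def)

lemma ectx_aux: "plug (foldl (\<lambda>C A. CApp C (tctx A)) C0 As) M = foldl App (plug C0 M) As"
  by (induction As arbitrary: C0) (auto simp: plug_CApp_tctx)

lemma plug_ectx: "plug (ectx As) M = foldl App M As"
  unfolding ectx_def ectx_aux by (simp add: plug_def)

lemma C_sub_E: "ctx_equiv \<subseteq> eval_equiv"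
proof
  fix p assume "p \<in> ctx_equiv"
  then obtain M N where p: "p = (M, N)" "(M, N) \<in> ctx_equiv" by (cases p) auto
  have c: "closed M" "closed N" using p(2) unfolding ctx_equiv_def by auto
  have "conv (foldl App M As) \<longleftrightarrow> conv (foldl App N As)" if As: "\<forall>A\<in>set As. closed A" for As
  proof -
    have "closed (plug (ectx As) M)" "closed (plug (ectx As) N)"
      using c As unfolding plug_ectx closed_def fv_foldl by auto
    then show ?thesis using p(2) unfolding ctx_equiv_def plug_ectx[symmetric] by blast
  qed
  then show "p \<in> eval_equiv" using p c unfolding eval_equiv_def by auto
qed

lemma E_sub_C: "eval_equiv \<subseteq> ctx_equiv"
proof
  fix p assume "p \<in> eval_equiv"
  then obtain M N where p: "p = (M, N)" "(M, N) \<in> sim" "(N, M) \<in> sim"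
    unfolding eval_equiv_sim by (cases p) auto
  have c: "closed M" "closed N" using p sim_closed by auto
  have "conv (plug C M) \<longleftrightarrow> conv (plug C N)" if "closed (plug C M)" "closed (plug C N)" for C
    using sim_plug[OF p(2)] sim_plug[OF p(3)] that sim_conv by blast
  then show "p \<in> ctx_equiv" using p c unfolding ctx_equiv_def by auto
qed


section \<open>Logical bisimulations\<close>


definition clbc :: "lterm rel \<Rightarrow> lterm rel \<Rightarrow> lterm \<Rightarrow> lterm \<Rightarrow> bool" where
  "clbc R1 R2 M N \<longleftrightarrow>
      (\<forall>M'. red M M' \<longrightarrow> (\<exists>N'. reds N N' \<and> (M', N') \<in> R2)) \<and>
      (\<forall>x M'. M = Lam x M' \<longrightarrow> (\<exists>y N'. reds N (Lam y N') \<and>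
          (\<forall>P Q. closed P \<and> closed Q \<and> (P, Q) \<in> ctx_closure R1 \<longrightarrow>
             (subst M' x P, subst N' y Q) \<in> R2))) \<and>
      (\<forall>N'. red N N' \<longrightarrow> (\<exists>M'. reds M M' \<and> (M', N') \<in> R2)) \<and>
      (\<forall>y N'. N = Lam y N' \<longrightarrow> (\<exists>x M'. reds M (Lam x M') \<and>
          (\<forall>P Q. closed P \<and> closed Q \<and> (P, Q) \<in> ctx_closure R1 \<longrightarrow>
             (subst M' x P, subst N' y Q) \<in> R2)))"

lemma coupled_lb_alt: "coupled_lb R1 R2 \<longleftrightarrow> rel_on_closed R1 \<and> rel_on_closed R2 \<and> R1 \<subseteq> R2 \<and>
   (\<forall>(M, N)\<in>R2. clbc R1 R2 M N)"
  unfolding coupled_lb_def clbc_def by (rule refl)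

lemma clb_c: "coupled_lb R1 R2 \<Longrightarrow> (M, N) \<in> R2 \<Longrightarrow> clbc R1 R2 M N"
  unfolding coupled_lb_alt by auto

lemma clb_R2_closed: "coupled_lb R1 R2 \<Longrightarrow> (M, N) \<in> R2 \<Longrightarrow> closed M \<and> closed N"
  unfolding coupled_lb_alt rel_on_closed_def by auto

lemma clb_1: "coupled_lb R1 R2 \<Longrightarrow> (M, N) \<in> R2 \<Longrightarrow> red M M' \<Longrightarrow> \<exists>N'. reds N N' \<and> (M', N') \<in> R2"
  using clb_c unfolding clbc_def by blast

lemma clb_2: "coupled_lb R1 R2 \<Longrightarrow> (Lam x M', N) \<in> R2 \<Longrightarrow> \<exists>y N'. reds N (Lam y N') \<and>
          (\<forall>P Q. closed P \<and> closed Q \<and> (P, Q) \<in> ctx_closure R1 \<longrightarrow>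
             (subst M' x P, subst N' y Q) \<in> R2)"
proof -
  assume "coupled_lb R1 R2" "(Lam x M', N) \<in> R2"
  then have "clbc R1 R2 (Lam x M') N" by (rule clb_c)
  then show ?thesis unfolding clbc_def by blast
qed

lemma clb_3: "coupled_lb R1 R2 \<Longrightarrow> (M, N) \<in> R2 \<Longrightarrow> red N N' \<Longrightarrow> \<exists>M'. reds M M' \<and> (M', N') \<in> R2"
  using clb_c unfolding clbc_def by blast

lemma clb_4: "coupled_lb R1 R2 \<Longrightarrow> (M, Lam y N') \<in> R2 \<Longrightarrow> \<exists>x M'. reds M (Lam x M') \<and>
          (\<forall>P Q. closed P \<and> closed Q \<and> (P, Q) \<in> ctx_closure R1 \<longrightarrow>
             (subst M' x P, subst N' y Q) \<in> R2)"
proof -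
  assume "coupled_lb R1 R2" "(M, Lam y N') \<in> R2"
  then have "clbc R1 R2 M (Lam y N')" by (rule clb_c)
  then show ?thesis unfolding clbc_def by blast
qed

lemma clb_1s: assumes c: "coupled_lb R1 R2" and r: "reds M M'" and m: "(M, N) \<in> R2"
  shows "\<exists>N'. reds N N' \<and> (M', N') \<in> R2"
  using r m unfolding reds_def
proof (induction rule: rtranclp_induct)
  case base then show ?case using reds_refl unfolding reds_def by blast
next
  case (step y z)
  then obtain N1 where "reds N N1" "(y, N1) \<in> R2" unfolding reds_def by blast
  then obtain N2 where "reds N1 N2" "(z, N2) \<in> R2" using clb_1[OF c] step unfolding reds_def by blast
  then show ?case using reds_trans \<open>reds N N1\<close> unfolding reds_def by blast
qed

lemma clb_3s: assumes c: "coupled_lb R1 R2" and r: "reds N N'" and m: "(M, N) \<in> R2"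
  shows "\<exists>M'. reds M M' \<and> (M', N') \<in> R2"
  using r m unfolding reds_def
proof (induction rule: rtranclp_induct)
  case base then show ?case using reds_refl unfolding reds_def by blast
next
  case (step y z)
  then obtain M1 where "reds M M1" "(M1, y) \<in> R2" unfolding reds_def by blast
  then obtain M2 where "reds M1 M2" "(M2, z) \<in> R2" using clb_3[OF c] step unfolding reds_def by blast
  then show ?case using reds_trans \<open>reds M M1\<close> unfolding reds_def by blast
qed

lemma ctx_closure_id: "closed W \<Longrightarrow> (W, W) \<in> ctx_closure R"
  unfolding ctx_closure_def
  by (intro CollectI exI[of _ "tctx W"] exI[of _ "[]"]) simp

lemma lb2_appbis: "app_bisim lb2"
  unfolding app_bisim_def rel_on_closed_def
proof (intro conjI ballI allI impI)
  fix p assume "p \<in> lb2"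
  then obtain M N R1 R2 where p: "p = (M, N)" "coupled_lb R1 R2" "(M, N) \<in> R2"
    unfolding lb2_def by (cases p) auto
  then show "case p of (M, N) \<Rightarrow> closed M \<and> closed N"
    using clb_R2_closed by auto
next
  fix p assume "p \<in> lb2"
  then obtain M N R1 R2 where p: "p = (M, N)" "coupled_lb R1 R2" "(M, N) \<in> R2"
    unfolding lb2_def by (cases p) auto
  have sub: "R2 \<subseteq> lb2" using p(2) unfolding lb2_def by blast
  have d1: "\<exists>y Q. reds N (Lam y Q) \<and> (\<forall>W. closed W \<longrightarrow> (subst P x W, subst Q y W) \<in> lb2)"
    if r: "reds M (Lam x P)" for x P
  proof -
    obtain N1 where n1: "reds N N1" "(Lam x P, N1) \<in> R2" using clb_1s[OF p(2) r p(3)] by blast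
    obtain y Q where q: "reds N1 (Lam y Q)" "\<forall>P0 Q0. closed P0 \<and> closed Q0 \<and> (P0, Q0) \<in> ctx_closure R1 \<longrightarrow>
             (subst P x P0, subst Q y Q0) \<in> R2" using clb_2[OF p(2) n1(2)] by blast
    then show ?thesis using reds_trans n1(1) ctx_closure_id sub by blast
  qed
  have d2: "\<exists>x P. reds M (Lam x P) \<and> (\<forall>W. closed W \<longrightarrow> (subst P x W, subst Q y W) \<in> lb2)"
    if r: "reds N (Lam y Q)" for y Q
  proof -
    obtain M1 where m1: "reds M M1" "(M1, Lam y Q) \<in> R2" using clb_3s[OF p(2) r p(3)] by blast
    obtain x P where q: "reds M1 (Lam x P)" "\<forall>P0 Q0. closed P0 \<and> closed Q0 \<and> (P0, Q0) \<in> ctx_closure R1 \<longrightarrow>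
             (subst P x P0, subst Q y Q0) \<in> R2" using clb_4[OF p(2) m1(2)] by blast
    then show ?thesis using reds_trans m1(1) ctx_closure_id sub by blast
  qed
  show "case p of (M, N) \<Rightarrow>
      (\<forall>x P. reds M (Lam x P) \<longrightarrow> (\<exists>y Q. reds N (Lam y Q) \<and>
          (\<forall>W. closed W \<longrightarrow> (subst P x W, subst Q y W) \<in> lb2))) \<and>
      (\<forall>y Q. reds N (Lam y Q) \<longrightarrow> (\<exists>x P. reds M (Lam x P) \<and>
          (\<forall>W. closed W \<longrightarrow> (subst P x W, subst Q y W) \<in> lb2)))"
    using p(1) d1 d2 by auto
qed

lemma lb2_sub_A: "lb2 \<subseteq> app_bisimilar"
  unfolding app_bisimilar_def using lb2_appbis by blast

lemma lb1_sub_lb2: "lb1 \<subseteq> lb2"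
proof
  fix p assume "p \<in> lb1"
  then obtain R1 R2 where r: "coupled_lb R1 R2" "p \<in> R1" unfolding lb1_def by auto
  then have "R1 \<subseteq> R2" unfolding coupled_lb_alt by auto
  then show "p \<in> lb2" unfolding lb2_def using r by auto
qed


lemma ctx_closure_sim: "(P, Q) \<in> ctx_closure eval_equiv \<Longrightarrow> (P, Q) \<in> sim"
proof -
  assume "(P, Q) \<in> ctx_closure eval_equiv"
  then obtain C Ms Ns where c: "P = fill C Ms" "Q = fill C Ns" "length Ms = nholes C" "length Ns = nholes C"
    "\<forall>i < nholes C. (Ms ! i, Ns ! i) \<in> eval_equiv" "closed (fill C Ms)" "closed (fill C Ns)"
    unfolding ctx_closure_def by blast
  have "\<forall>i < nholes C. (Ms ! i, Ns ! i) \<in> sim" using c(5) unfolding eval_equiv_sim by blast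
  then show ?thesis using sim_fill[OF c(3,4)] c by simp
qed

lemma ctx_closure_sym: "(P, Q) \<in> ctx_closure eval_equiv \<Longrightarrow> (Q, P) \<in> ctx_closure eval_equiv"
proof -
  assume "(P, Q) \<in> ctx_closure eval_equiv"
  then obtain C Ms Ns where c: "P = fill C Ms" "Q = fill C Ns" "length Ms = nholes C" "length Ns = nholes C"
    "\<forall>i < nholes C. (Ms ! i, Ns ! i) \<in> eval_equiv" "closed (fill C Ms)" "closed (fill C Ns)"
    unfolding ctx_closure_def by blast
  have "\<forall>i < nholes C. (Ns ! i, Ms ! i) \<in> eval_equiv" using c(5) E_sym by blast
  then show ?thesis unfolding ctx_closure_def using c by blast
qed

lemma E_red: "(M, N) \<in> eval_equiv \<Longrightarrow> reds M M' \<Longrightarrow> (M', N) \<in> eval_equiv"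
proof -
  assume e: "(M, N) \<in> eval_equiv" and r: "reds M M'"
  have c: "closed M" "closed M'" using e E_closed reds_closed r by auto
  have "(M, M') \<in> evpre" unfolding evpre_def
    using c reds_foldl[OF r] conv_reds by auto
  moreover have "(M', M) \<in> sim" using sim_red_left[OF sim_refl[OF c(1)] r] .
  ultimately have "(M', M) \<in> eval_equiv" unfolding eval_equiv_sim evpre_eq by auto
  then show ?thesis using E_trans e by blast
qed

lemma E_lam: "(Lam x M', N) \<in> eval_equiv \<Longrightarrow> \<exists>y Q. reds N (Lam y Q) \<and>
          (\<forall>P0 Q0. closed P0 \<and> closed Q0 \<and> (P0, Q0) \<in> ctx_closure eval_equiv \<longrightarrow>
             (subst M' x P0, subst Q y Q0) \<in> eval_equiv)"
proof -
  assume e: "(Lam x M', N) \<in> eval_equiv"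
  obtain y Q where q: "reds N (Lam y Q)" "\<forall>W. closed W \<longrightarrow> (subst M' x W, subst Q y W) \<in> eval_equiv"
    using E_step[OF e reds_refl] by blast
  have cl: "closed (Lam x M')" using e E_closed by blast
  have "(subst M' x P0, subst Q y Q0) \<in> eval_equiv"
    if a: "closed P0" "closed Q0" "(P0, Q0) \<in> ctx_closure eval_equiv" for P0 Q0
  proof -
    have s: "(P0, Q0) \<in> sim" "(Q0, P0) \<in> sim" using a ctx_closure_sim ctx_closure_sym by blast+
    have c2: "closed (subst M' x P0)" "closed (subst M' x Q0)" using closed_lam_subst cl a by blast+
    have "(subst M' x P0, subst M' x Q0) \<in> sim"
      using howe_sim[OF howe_subst[OF howe_refl osim_howe[OF sim_osim[OF s(1)]] a(1,2)] c2] .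
    moreover have "(subst M' x Q0, subst M' x P0) \<in> sim"
      using howe_sim[OF howe_subst[OF howe_refl osim_howe[OF sim_osim[OF s(2)]] a(2,1)] c2(2,1)] .
    ultimately have "(subst M' x P0, subst M' x Q0) \<in> eval_equiv" unfolding eval_equiv_sim by auto
    then show ?thesis using E_trans q(2) a(2) by blast
  qed
  then show ?thesis using q(1) by blast
qed

lemma E_clb: "coupled_lb eval_equiv eval_equiv"
  unfolding coupled_lb_def
proof (intro conjI ballI allI impI subset_refl)
  show "rel_on_closed eval_equiv" unfolding rel_on_closed_def using E_closed by auto
  then show "rel_on_closed eval_equiv" .
next
  fix p M' assume "p \<in> eval_equiv"
  then show "case p of (M, N) \<Rightarrow> (\<forall>M'. red M M' \<longrightarrow> (\<exists>N'. reds N N' \<and> (M', N') \<in> eval_equiv)) \<and>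
      (\<forall>x M'. M = Lam x M' \<longrightarrow> (\<exists>y N'. reds N (Lam y N') \<and>
          (\<forall>P Q. closed P \<and> closed Q \<and> (P, Q) \<in> ctx_closure eval_equiv \<longrightarrow>
             (subst M' x P, subst N' y Q) \<in> eval_equiv))) \<and>
      (\<forall>N'. red N N' \<longrightarrow> (\<exists>M'. reds M M' \<and> (M', N') \<in> eval_equiv)) \<and>
      (\<forall>y N'. N = Lam y N' \<longrightarrow> (\<exists>x M'. reds M (Lam x M') \<and>
          (\<forall>P Q. closed P \<and> closed Q \<and> (P, Q) \<in> ctx_closure eval_equiv \<longrightarrow>
             (subst M' x P, subst N' y Q) \<in> eval_equiv)))"
  proof (cases p)
    case (Pair M N)
    assume pe: "p \<in> eval_equiv"
    then have e: "(M, N) \<in> eval_equiv" "(N, M) \<in> eval_equiv" using Pair E_sym by auto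
    have c1: "\<exists>N'. reds N N' \<and> (M', N') \<in> eval_equiv" if "red M M'" for M'
      using E_red[OF e(1) red_reds[OF that]] reds_refl by blast
    have c2: "\<exists>y N'. reds N (Lam y N') \<and>
          (\<forall>P Q. closed P \<and> closed Q \<and> (P, Q) \<in> ctx_closure eval_equiv \<longrightarrow>
             (subst M' x P, subst N' y Q) \<in> eval_equiv)" if "M = Lam x M'" for x M'
      using E_lam e(1) that by blast
    have c3: "\<exists>M'. reds M M' \<and> (M', N') \<in> eval_equiv" if "red N N'" for N'
      using E_sym[OF E_red[OF e(2) red_reds[OF that]]] reds_refl by blast
    have c4: "\<exists>x M'. reds M (Lam x M') \<and>
          (\<forall>P Q. closed P \<and> closed Q \<and> (P, Q) \<in> ctx_closure eval_equiv \<longrightarrow>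
             (subst M' x P, subst N' y Q) \<in> eval_equiv)" if Nl: "N = Lam y N'" for y N'
    proof -
      obtain x Q where q: "reds M (Lam x Q)" "\<forall>P0 Q0. closed P0 \<and> closed Q0 \<and> (P0, Q0) \<in> ctx_closure eval_equiv \<longrightarrow>
             (subst N' y P0, subst Q x Q0) \<in> eval_equiv"
        using E_lam[of y N' M] e(2) Nl by auto
      then show ?thesis using ctx_closure_sym E_sym by blast
    qed
    show ?thesis using Pair c1 c2 c3 c4 by auto
  qed
qed

lemma E_sub_lb1: "eval_equiv \<subseteq> lb1"
  unfolding lb1_def using E_clb by blast

theorem mainTheorem10:
  shows "app_bisimilar = lb2 \<and> lb2 = eval_equiv \<and> eval_equiv = ctx_equiv \<and> ctx_equiv = lb1"
  using A_sub_E E_sub_A C_sub_E E_sub_C lb2_sub_A lb1_sub_lb2 E_sub_lb1 by blast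


end
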